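(* Let $d\ge1$ and let $X,X'$ be $d$-dimensional random vectors such that $(X,X')$ is an exchangeable pair (i.e. $(X,X')$ and $(X',X)$ have the same joint distribution). Let $D=X-X'$ and suppose that $$\mathbb E[D\mid X]=\lambda\Lambda X+\lambda R$$ for some $0<\lambda<1$, some invertible $d\times d$ matrix $\Lambda$ and some random vector $R$. Let $\ell=e_1^t\Lambda^{-1}$ be the first row of $\Lambda^{-1}$, let $X_1$ and $D_1$ denote the first components of $X$ and $D$, and let $Z$ be a standard normal random variable. Then $$d_K(X_1,Z)\le \mathbb E\Big[\Big|1-\frac{1}{2\lambda}\mathbb E[\ell D\,D_1\mid X]\Big|\Big]+\frac1\lambda\mathbb E\Big[\big|\mathbb E[|\ell D|\,D_1\mid X]\big|\Big]+\frac{\sqrt{2\pi}}{4}\mathbb E[|\ell R|],$$ where $\ell D$ and $\ell R$ denote the Euclidean scalar products of $\ell$ (as a vector) with $D$ and $R$.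
   Context: $d_K(X,Y)=\sup_{z\in\mathbb R}|\mathbb P(X\le z)-\mathbb P(Y\le z)|$ denotes the Kolmogorov distance. *)

theory Defs
  imports "HOL-Probability.Probability"
begin

definition kolmogorov_dist :: "real measure \<Rightarrow> real measure \<Rightarrow> real" where
  "kolmogorov_dist P Q = (SUP z. \<bar>measure P {..z} - measure Q {..z}\<bar>)"

definition sigma_rv :: "'a measure \<Rightarrow> ('a \<Rightarrow> 'b::topological_space) \<Rightarrow> 'a measure" where
  "sigma_rv M X = vimage_algebra (space M) X borel"

end

theory Submission
  imports Defs "HOL-Real_Asymp.Real_Asymp"
begin


abbreviation "NN \<equiv> density lborel std_normal_density"

definition Phi :: "real \<Rightarrow> real" where "Phi x = measure NN {..x}"

lemma NN_real_distribution: "real_distribution NN"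
  by (simp add: prob_space_normal_density real_distribution_def real_distribution_axioms_def)

lemma Phi_cdf: "Phi = cdf NN"
  by (rule ext) (simp add: Phi_def cdf_def)

lemma cont_p: "continuous_on S std_normal_density"
  unfolding normal_density_def by (intro continuous_intros) auto

lemma Phi_diff:
  assumes "x \<le> y"
  shows "Phi y - Phi x = integral {x..y} std_normal_density"
proof (cases "x = y")
  case True then show ?thesis by simp
next
  case False
  then have xy: "x < y" using assms by simp
  interpret real_distribution NN by (rule NN_real_distribution)
  have 1: "Phi y - Phi x = measure NN {x<..y}"
    using cdf_diff_eq[OF xy] by (simp add: Phi_cdf)
  have hi: "(std_normal_density has_integral integral {x..y} std_normal_density) {x..y}"
    using integrable_continuous_interval[OF cont_p] by blast
  have hi2: "(std_normal_density has_integral integral {x..y} std_normal_density) {x<..y}"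
  proof -
    have "negligible {x}" by simp
    then have n1: "negligible {u \<in> {x..y} - {x<..y}. std_normal_density u \<noteq> 0}"
      by (rule negligible_subset) auto
    have e: "{u \<in> {x<..y} - {x..y}. std_normal_density u \<noteq> 0} = {}" by auto
    have n2: "negligible {u \<in> {x<..y} - {x..y}. std_normal_density u \<noteq> 0}" unfolding e by simp
    show ?thesis using has_integral_spike_set_eq[OF n1 n2] hi by simp
  qed
  have "emeasure NN {x<..y} = (\<integral>\<^sup>+ u. ennreal (std_normal_density u) * indicator {x<..y} u \<partial>lborel)"
    by (simp add: emeasure_density)
  also have "\<dots> = ennreal (integral {x..y} std_normal_density)"
    by (rule nn_integral_has_integral_lebesgue'[OF _ hi2]) simp
  finally have em: "emeasure NN {x<..y} = ennreal (integral {x..y} std_normal_density)" .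
  have "measure NN {x<..y} = integral {x..y} std_normal_density"
  proof -
    have "0 \<le> integral {x..y} std_normal_density"
      using hi by (intro integral_nonneg) auto
    then show "measure NN {x<..y} = integral {x..y} std_normal_density"
      using em by (simp add: measure_def)
  qed
  then show ?thesis using 1 by simp
qed

lemma Phi_deriv: "(Phi has_real_derivative std_normal_density x) (at x)"
proof -
  define a where "a = x - 1"
  define b where "b = x + 1"
  have "((\<lambda>u. integral {a..u} std_normal_density) has_vector_derivative std_normal_density x) (at x within {a..b})"
    by (rule integral_has_vector_derivative[OF cont_p]) (auto simp: a_def b_def)
  moreover have "at x within {a..b} = at x"
    by (rule at_within_interior) (auto simp: a_def b_def)
  ultimately have "((\<lambda>u. Phi a + integral {a..u} std_normal_density) has_real_derivative std_normal_density x) (at x)"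
    by (auto simp: has_real_derivative_iff_has_vector_derivative intro!: derivative_eq_intros)
  then show ?thesis
  proof (rule has_field_derivative_transform_within_open[where S = "{a<..<b}"])
    show "x \<in> {a<..<b}" by (auto simp: a_def b_def)
    fix u assume "u \<in> {a<..<b}"
    then show "Phi a + integral {a..u} std_normal_density = Phi u"
      using Phi_diff[of a u] by simp
  qed simp
qed

lemma Phi_deriv_chain2 [derivative_intros]:
  "(f has_real_derivative f') (at x within S) \<Longrightarrow>
   ((\<lambda>u. Phi (f u)) has_real_derivative std_normal_density (f x) * f') (at x within S)"
  using DERIV_chain2[OF Phi_deriv] by blast

lemma Phi_nonneg: "0 \<le> Phi x" and Phi_le1: "Phi x \<le> 1"
proof -
  interpret real_distribution NN by (rule NN_real_distribution)
  show "0 \<le> Phi x" "Phi x \<le> 1" by (simp_all add: Phi_cdf cdf_nonneg cdf_bounded_prob)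
qed

lemma Phi_top: "(Phi \<longlongrightarrow> 1) at_top"
proof -
  interpret real_distribution NN by (rule NN_real_distribution)
  show ?thesis using cdf_lim_at_top_prob by (simp add: Phi_cdf)
qed

lemma Phi_bot: "(Phi \<longlongrightarrow> 0) at_bot"
proof -
  interpret real_distribution NN by (rule NN_real_distribution)
  show ?thesis using cdf_lim_at_bot by (simp add: Phi_cdf)
qed

lemma Phi_sym: "Phi (-x) = 1 - Phi x"
proof -
  define k where "k u = Phi (-u) + Phi u" for u
  have d: "(k has_real_derivative 0) (at u)" for u
  proof -
    have "(k has_real_derivative (std_normal_density (-u) * (-1) + std_normal_density u)) (at u)"
      unfolding k_def
      by (intro derivative_eq_intros) auto
    moreover have "std_normal_density (-u) = std_normal_density u" by (simp add: normal_density_def)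
    ultimately show ?thesis by simp
  qed
  have const: "k u = k 0" for u
    using DERIV_isconst_all d by blast
  have "(k \<longlongrightarrow> 0 + 1) at_top"
    unfolding k_def
    by (intro tendsto_add filterlim_compose[OF Phi_bot] Phi_top filterlim_uminus_at_bot_at_top)
  moreover have "k = (\<lambda>_. k 0)" using const by (intro ext) simp
  then have "(k \<longlongrightarrow> k 0) at_top" by (metis tendsto_const)
  ultimately have "k 0 = 1" using tendsto_unique[OF trivial_limit_at_top_linorder] by fastforce
  then show ?thesis using const[of x] by (simp add: k_def)
qed



lemma p_def': "std_normal_density x = exp (- x\<^sup>2 / 2) / sqrt (2 * pi)"
  by (simp add: std_normal_density_def)

lemma p_pos: "0 < std_normal_density x"
  by (simp add: p_def')

lemma p_deriv [derivative_intros]: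
  "(f has_real_derivative f') (at x within S) \<Longrightarrow>
   ((\<lambda>u. std_normal_density (f u)) has_real_derivative (- f x * std_normal_density (f x) * f')) (at x within S)"
  unfolding p_def'
  by (auto intro!: derivative_eq_intros simp: power2_eq_square field_simps)

lemma exp_p: "exp (x\<^sup>2 / 2) * std_normal_density x = 1 / sqrt (2 * pi)"
  by (simp add: p_def' exp_minus field_simps)

lemma nonincr_lim_nonneg:
  fixes h h' :: "real \<Rightarrow> real"
  assumes d: "\<And>x. x \<ge> a \<Longrightarrow> (h has_real_derivative h' x) (at x)"
    and n: "\<And>x. x \<ge> a \<Longrightarrow> h' x \<le> 0"
    and l: "(h \<longlongrightarrow> 0) at_top"
  shows "h a \<ge> 0"
proof -
  have "h y \<le> h a" if "y \<ge> a" for y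
    using DERIV_nonpos_imp_nonincreasing[of a y h] that d n by fastforce
  then have "eventually (\<lambda>y. h y \<le> h a) at_top" by (auto simp: eventually_at_top_linorder)
  then show ?thesis using tendsto_upperbound[OF l] by auto
qed

lemma mills_upper:
  assumes "w > 0"
  shows "1 - Phi w \<le> std_normal_density w / w"
proof -
  define h where "h x = std_normal_density x / x - (1 - Phi x)" for x
  have "h w \<ge> 0"
  proof (rule nonincr_lim_nonneg[where h = h and h' = "\<lambda>x. - std_normal_density x / x\<^sup>2"])
    fix x assume "x \<ge> w"
    then have "x \<noteq> 0" using assms by auto
    show "(h has_real_derivative - std_normal_density x / x\<^sup>2) (at x)"
      unfolding h_def
      using \<open>x \<noteq> 0\<close> by (auto intro!: derivative_eq_intros simp: field_simps power2_eq_square)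
    show "- std_normal_density x / x\<^sup>2 \<le> 0" using p_pos[of x] by simp
  next
    have "((\<lambda>x. std_normal_density x / x) \<longlongrightarrow> 0) at_top"
      unfolding p_def' by real_asymp
    then have "(h \<longlongrightarrow> 0 - (1 - 1)) at_top"
      unfolding h_def by (intro tendsto_diff tendsto_const Phi_top)
    then show "(h \<longlongrightarrow> 0) at_top" by simp
  qed
  then show ?thesis by (simp add: h_def)
qed

lemma mills_lower: "w * std_normal_density w / (1 + w\<^sup>2) \<le> 1 - Phi w"
proof -
  define h where "h x = (1 - Phi x) - x * std_normal_density x / (1 + x\<^sup>2)" for x
  have "h w \<ge> 0"
  proof (rule nonincr_lim_nonneg[where h = h and h' = "\<lambda>x. - 2 * std_normal_density x / (1 + x\<^sup>2)\<^sup>2"])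
    fix x :: real
    have "1 + x\<^sup>2 > 0" by (simp add: add_pos_nonneg)
    then have nz: "1 + x\<^sup>2 \<noteq> 0" by simp
    have nz2: "1 + (x * (x * (x * x)) + x * (x * 2)) \<noteq> 0"
    proof -
      have "1 + (x * (x * (x * x)) + x * (x * 2)) = (1 + x\<^sup>2)\<^sup>2" by (simp add: power2_eq_square algebra_simps)
      then show ?thesis using nz by simp
    qed
    show "(h has_real_derivative - 2 * std_normal_density x / (1 + x\<^sup>2)\<^sup>2) (at x)"
      unfolding h_def
      apply (rule DERIV_cong)
       apply (rule derivative_eq_intros refl | simp add: nz)+
      using nz nz2 by (simp add: field_simps power2_eq_square)
    show "- 2 * std_normal_density x / (1 + x\<^sup>2)\<^sup>2 \<le> 0" using p_pos[of x] by simp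
  next
    have "((\<lambda>x. x * std_normal_density x / (1 + x\<^sup>2)) \<longlongrightarrow> 0) at_top"
      unfolding p_def' by real_asymp
    then have "(h \<longlongrightarrow> (1 - 1) - 0) at_top"
      unfolding h_def by (intro tendsto_diff tendsto_const Phi_top)
    then show "(h \<longlongrightarrow> 0) at_top" by simp
  qed
  then show ?thesis by (simp add: h_def)
qed

definition K2 :: "real \<Rightarrow> real" where "K2 w = w * exp (w\<^sup>2 / 2) * (1 - Phi w)"

lemma K2_deriv: "(K2 has_real_derivative exp (w\<^sup>2 / 2) * ((1 + w\<^sup>2) * (1 - Phi w) - w * std_normal_density w)) (at w)"
  unfolding K2_def
  by (auto intro!: derivative_eq_intros simp: field_simps power2_eq_square)

lemma K2_mono: assumes "x \<le> y" shows "K2 x \<le> K2 y"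
proof -
  have "0 \<le> exp (w\<^sup>2 / 2) * ((1 + w\<^sup>2) * (1 - Phi w) - w * std_normal_density w)" for w
  proof -
    have "1 + w\<^sup>2 > 0" by (simp add: add_pos_nonneg)
    then have "w * std_normal_density w \<le> (1 + w\<^sup>2) * (1 - Phi w)"
      using mills_lower[of w] by (simp add: divide_le_eq mult.commute)
    then show ?thesis by simp
  qed
  then show ?thesis
    using DERIV_nonneg_imp_nondecreasing[OF assms] K2_deriv by blast
qed

lemma K2_le: "K2 w \<le> 1 / sqrt (2 * pi)"
proof (cases "w > 0")
  case True
  have "w * (1 - Phi w) \<le> std_normal_density w"
    using mills_upper[OF True] True by (simp add: le_divide_eq mult.commute)
  then have "exp (w\<^sup>2 / 2) * (w * (1 - Phi w)) \<le> exp (w\<^sup>2 / 2) * std_normal_density w"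
    by (intro mult_left_mono) auto
  also have "\<dots> = 1 / sqrt (2 * pi)" by (rule exp_p)
  finally show ?thesis by (simp add: K2_def mult_ac)
next
  case False
  then have "K2 w \<le> 0" unfolding K2_def using Phi_le1[of w]
    by (intro mult_nonpos_nonneg mult_nonpos_nonneg) auto
  then show ?thesis by (smt (verit) real_sqrt_gt_zero pi_gt_zero divide_pos_pos)
qed



lemma Phi_0: "Phi 0 = 1/2"
  using Phi_sym[of 0] by simp

definition uu :: "real \<Rightarrow> real" where "uu z = 4 * (2 * Phi z - 1) / sqrt (2 * pi) - z"
definition tstar :: real where "tstar = sqrt (2 * ln (4 / pi))"

lemma ss: "sqrt (2 * pi) * sqrt (2 * pi) = 2 * pi" by simp

lemma uu'_eq: "8 * std_normal_density t / sqrt (2 * pi) - 1 = (4 / pi) * exp (- t\<^sup>2 / 2) - 1"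
proof -
  have "8 * std_normal_density t / sqrt (2 * pi) = 8 * exp (- t\<^sup>2 / 2) / (sqrt (2 * pi) * sqrt (2 * pi))"
    by (simp add: p_def')
  also have "\<dots> = (4 / pi) * exp (- t\<^sup>2 / 2)" unfolding ss by simp
  finally show ?thesis by simp
qed

lemma aux_s: "4 * (x * sqrt (2 * pi)) / pi = 8 * x / sqrt (2 * pi)"
proof -
  have s: "sqrt (2 * pi) * sqrt (2 * pi) = 2 * pi" by simp
  have p: "sqrt (2*pi) > 0" by simp
  have "4 * (x * sqrt (2 * pi)) / pi = 4 * x * (sqrt (2 * pi) * sqrt (2 * pi)) / (pi * sqrt (2 * pi))"
    using p by (simp add: field_simps)
  also have "\<dots> = 8 * x / sqrt (2 * pi)" unfolding s by simp
  finally show ?thesis .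
qed

lemma uu_deriv: "(uu has_real_derivative (8 * std_normal_density t / sqrt (2 * pi) - 1)) (at t)"
  unfolding uu_def
  apply (rule DERIV_cong)
   apply (rule derivative_eq_intros refl Phi_deriv_chain2 | simp)+
  by (simp add: aux_s)

lemma tstar_pos: "tstar > 0"
  using pi_less_4 by (simp add: tstar_def)

lemma exp_tstar: "exp (- tstar\<^sup>2 / 2) = pi / 4"
proof -
  have "ln (4 / pi) > 0" using pi_less_4 by simp
  then have "tstar\<^sup>2 = 2 * ln (4 / pi)" by (simp add: tstar_def)
  then have "exp (- tstar\<^sup>2 / 2) = exp (- ln (4 / pi))" by simp
  also have "\<dots> = pi / 4" by (simp add: exp_minus)
  finally show ?thesis .
qed

lemma uu'_nonneg: assumes "0 \<le> t" "t \<le> tstar" shows "8 * std_normal_density t / sqrt (2 * pi) - 1 \<ge> 0"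
proof -
  have "t\<^sup>2 \<le> tstar\<^sup>2" using assms by (intro power_mono) auto
  then have "exp (- tstar\<^sup>2 / 2) \<le> exp (- t\<^sup>2 / 2)" by simp
  then have "pi / 4 \<le> exp (- t\<^sup>2 / 2)" using exp_tstar by linarith
  then show ?thesis unfolding uu'_eq by (simp add: field_simps)
qed

lemma uu'_nonpos: assumes "tstar \<le> t" shows "8 * std_normal_density t / sqrt (2 * pi) - 1 \<le> 0"
proof -
  have "tstar\<^sup>2 \<le> t\<^sup>2" using assms tstar_pos by (intro power_mono) auto
  then have "exp (- t\<^sup>2 / 2) \<le> exp (- tstar\<^sup>2 / 2)" by simp
  then have "exp (- t\<^sup>2 / 2) \<le> pi / 4" using exp_tstar by linarith
  then show ?thesis unfolding uu'_eq by (simp add: field_simps)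
qed

lemma uu_inc: assumes "0 \<le> s" "s \<le> s'" "s' \<le> tstar" shows "uu s \<le> uu s'"
proof -
  have "8 * std_normal_density t / sqrt (2 * pi) - 1 \<ge> 0" if "s \<le> t" "t \<le> s'" for t
    using uu'_nonneg that assms by simp
  then show ?thesis using DERIV_nonneg_imp_nondecreasing[OF assms(2)] uu_deriv by blast
qed

lemma uu_dec: assumes "tstar \<le> s" "s \<le> s'" shows "uu s' \<le> uu s"
proof -
  have "8 * std_normal_density t / sqrt (2 * pi) - 1 \<le> 0" if "s \<le> t" "t \<le> s'" for t
    using uu'_nonpos that assms by simp
  then show ?thesis using DERIV_nonpos_imp_nonincreasing[OF assms(2)] uu_deriv by blast
qed

definition FF :: "real \<Rightarrow> real" where "FF z = (2 * Phi z - 1)\<^sup>2 - 1 + exp (- z\<^sup>2 / 2)"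

lemma FF_deriv: "(FF has_real_derivative exp (- t\<^sup>2 / 2) * uu t) (at t)"
  unfolding FF_def
  apply (rule DERIV_cong)
   apply (auto intro!: derivative_eq_intros)[1]
  by (simp add: uu_def p_def' field_simps power2_eq_square)

lemma FF_nonneg: assumes "z \<ge> 0" shows "FF z \<ge> 0"
proof (cases "uu z \<ge> 0")
  case True
  have "uu s \<ge> 0" if "0 \<le> s" "s \<le> z" for s
  proof (cases "s \<le> tstar")
    case True
    then have "uu 0 \<le> uu s" using uu_inc[of 0 s] that by simp
    then show ?thesis by (simp add: uu_def Phi_0)
  next
    case False
    then have "uu z \<le> uu s" using uu_dec[of s z] that by simp
    then show ?thesis using \<open>uu z \<ge> 0\<close> by simp
  qed
  then have "FF 0 \<le> FF z"
    using DERIV_nonneg_imp_nondecreasing[OF assms, of FF] FF_deriv by fastforce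
  then show ?thesis by (simp add: FF_def Phi_0)
next
  case False
  then have zt: "z > tstar" using uu_inc[of 0 z] assms by (cases "z \<le> tstar") (auto simp: uu_def Phi_0)
  show ?thesis
  proof (rule nonincr_lim_nonneg[where h = FF and h' = "\<lambda>t. exp (- t\<^sup>2 / 2) * uu t"])
    fix x assume "z \<le> x"
    then have "uu x \<le> uu z" using uu_dec[of z x] zt by simp
    then show "exp (- x\<^sup>2 / 2) * uu x \<le> 0" using False by (simp add: mult_nonneg_nonpos)
    show "(FF has_real_derivative exp (- x\<^sup>2 / 2) * uu x) (at x)" by (rule FF_deriv)
  next
    have "((\<lambda>x::real. exp (- x\<^sup>2 / 2)) \<longlongrightarrow> 0) at_top" by real_asymp
    then have "(FF \<longlongrightarrow> (2 * 1 - 1)\<^sup>2 - 1 + 0) at_top"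
      unfolding FF_def by (intro tendsto_intros Phi_top)
    then show "(FF \<longlongrightarrow> 0) at_top" by simp
  qed
qed

lemma psi_le_nonneg: assumes "z \<ge> 0" shows "exp (z\<^sup>2 / 2) * (Phi z * (1 - Phi z)) \<le> 1 / 4"
proof -
  have "1 - exp (- z\<^sup>2 / 2) \<le> (2 * Phi z - 1)\<^sup>2" using FF_nonneg[OF assms] by (simp add: FF_def)
  then have "Phi z * (1 - Phi z) \<le> exp (- z\<^sup>2 / 2) / 4"
    by (simp add: power2_eq_square algebra_simps)
  then have "exp (z\<^sup>2 / 2) * (Phi z * (1 - Phi z)) \<le> exp (z\<^sup>2 / 2) * (exp (- z\<^sup>2 / 2) / 4)"
    by (intro mult_left_mono) auto
  also have "\<dots> = 1 / 4" by (simp add: exp_minus field_simps)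
  finally show ?thesis .
qed

lemma psi_le: "exp (z\<^sup>2 / 2) * (Phi z * (1 - Phi z)) \<le> 1 / 4"
proof (cases "z \<ge> 0")
  case True then show ?thesis by (rule psi_le_nonneg)
next
  case False
  then have "exp ((-z)\<^sup>2 / 2) * (Phi (-z) * (1 - Phi (-z))) \<le> 1 / 4" by (intro psi_le_nonneg) auto
  then show ?thesis by (simp add: Phi_sym mult_ac)
qed



abbreviation "sp \<equiv> sqrt (2 * pi)"

definition F1 :: "real \<Rightarrow> real \<Rightarrow> real" where
  "F1 z w = sp * (1 - Phi z) * exp (w\<^sup>2 / 2) * Phi w"
definition F2 :: "real \<Rightarrow> real \<Rightarrow> real" where
  "F2 z w = sp * Phi z * exp (w\<^sup>2 / 2) * (1 - Phi w)"
definition sf :: "real \<Rightarrow> real \<Rightarrow> real" where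
  "sf z w = (if w \<le> z then F1 z w else F2 z w)"
definition phis :: "real \<Rightarrow> real \<Rightarrow> real" where
  "phis z w = w * sf z w + (if w \<le> z then 1 else 0) - Phi z"
definition GG :: "real \<Rightarrow> real \<Rightarrow> real" where
  "GG z w = w * sf z w + (if z < w then 1 else 0)"

lemma sp_exp_p: "sp * exp (w\<^sup>2 / 2) * std_normal_density w = 1"
  using exp_p[of w] by (simp add: field_simps)

lemma F1_deriv: "(F1 z has_real_derivative w * F1 z w + (1 - Phi z)) (at w)"
proof -
  have "(F1 z has_real_derivative sp * (1 - Phi z) * (w * exp (w\<^sup>2 / 2) * Phi w + exp (w\<^sup>2 / 2) * std_normal_density w)) (at w)"
    unfolding F1_def by (auto intro!: derivative_eq_intros simp: field_simps power2_eq_square)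
  moreover have "sp * (1 - Phi z) * (w * exp (w\<^sup>2 / 2) * Phi w + exp (w\<^sup>2 / 2) * std_normal_density w)
     = w * F1 z w + (1 - Phi z) * (sp * exp (w\<^sup>2 / 2) * std_normal_density w)"
    by (simp add: F1_def algebra_simps)
  ultimately show ?thesis by (simp add: sp_exp_p)
qed

lemma F2_deriv: "(F2 z has_real_derivative w * F2 z w - Phi z) (at w)"
proof -
  have "(F2 z has_real_derivative sp * Phi z * (w * exp (w\<^sup>2 / 2) * (1 - Phi w) - exp (w\<^sup>2 / 2) * std_normal_density w)) (at w)"
    unfolding F2_def by (auto intro!: derivative_eq_intros simp: field_simps power2_eq_square)
  moreover have "sp * Phi z * (w * exp (w\<^sup>2 / 2) * (1 - Phi w) - exp (w\<^sup>2 / 2) * std_normal_density w)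
     = w * F2 z w - Phi z * (sp * exp (w\<^sup>2 / 2) * std_normal_density w)"
    by (simp add: F2_def algebra_simps)
  ultimately show ?thesis by (simp add: sp_exp_p)
qed

lemma F12_eq: "F1 z z = F2 z z"
  by (simp add: F1_def F2_def)

lemma F1_cont: "continuous_on S (F1 z)"
  using F1_deriv by (meson DERIV_isCont continuous_at_imp_continuous_on)
lemma F2_cont: "continuous_on S (F2 z)"
  using F2_deriv by (meson DERIV_isCont continuous_at_imp_continuous_on)

lemma sf_cont: "continuous_on S (sf z)"
proof -
  have "continuous_on UNIV (\<lambda>w. if id w \<le> z then F1 z w else F2 z w)"
    by (rule continuous_on_cases_le) (auto intro: F1_cont F2_cont continuous_on_id simp: F12_eq)
  then show ?thesis unfolding sf_def by (auto intro: continuous_on_subset)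
qed

lemma sf_deriv: assumes "w \<noteq> z" shows "(sf z has_real_derivative phis z w) (at w)"
proof (cases "w < z")
  case True
  show ?thesis
  proof (rule has_field_derivative_transform_within_open[where S = "{..<z}" and f = "F1 z"])
    show "(F1 z has_real_derivative phis z w) (at w)"
      using F1_deriv[of z w] True by (simp add: phis_def sf_def add_diff_eq)
  qed (use True in \<open>auto simp: sf_def\<close>)
next
  case False
  then have wz: "w > z" using assms by simp
  show ?thesis
  proof (rule has_field_derivative_transform_within_open[where S = "{z<..}" and f = "F2 z"])
    show "(F2 z has_real_derivative phis z w) (at w)"
      using F2_deriv[of z w] wz by (simp add: phis_def sf_def)
  qed (use wz in \<open>auto simp: sf_def\<close>)
qed

lemma g_left: "w \<le> z \<Longrightarrow> w * sf z w = sp * (1 - Phi z) * (- K2 (-w))"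
  by (simp add: sf_def F1_def K2_def Phi_sym)
lemma g_right: "z < w \<Longrightarrow> w * sf z w = sp * Phi z * K2 w"
  by (simp add: sf_def F2_def K2_def)
lemma gz_eq: "sp * (1 - Phi z) * (- K2 (-z)) = sp * Phi z * K2 z"
  by (simp add: K2_def Phi_sym)

lemma g_le_gz: "w \<le> z \<Longrightarrow> w * sf z w \<le> sp * Phi z * K2 z"
proof -
  assume wz: "w \<le> z"
  have "K2 (-z) \<le> K2 (-w)" using K2_mono wz by simp
  then have "sp * (1 - Phi z) * (- K2 (-w)) \<le> sp * (1 - Phi z) * (- K2 (-z))"
    using Phi_le1[of z] by (intro mult_left_mono) auto
  then show ?thesis using g_left[OF wz] gz_eq[of z] by linarith
qed

lemma gz_le_g: "z < w \<Longrightarrow> sp * Phi z * K2 z \<le> w * sf z w"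
proof -
  assume wz: "z < w"
  have "K2 z \<le> K2 w" using K2_mono wz by simp
  then have "sp * Phi z * K2 z \<le> sp * Phi z * K2 w"
    using Phi_nonneg[of z] by (intro mult_left_mono) auto
  then show ?thesis using g_right[OF wz] by simp
qed

lemma g_mono: assumes "x \<le> y" shows "x * sf z x \<le> y * sf z y"
proof (cases "y \<le> z")
  case True
  have "K2 (-y) \<le> K2 (-x)" using K2_mono assms by simp
  then have "sp * (1 - Phi z) * (- K2 (-x)) \<le> sp * (1 - Phi z) * (- K2 (-y))"
    using Phi_le1[of z] by (intro mult_left_mono) auto
  then show ?thesis using g_left[of x z] g_left[of y z] True assms by (metis order_trans)
next
  case False
  show ?thesis
  proof (cases "x \<le> z")
    case True
    then show ?thesis using g_le_gz[OF True] gz_le_g[of z y] False by simp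
  next
    case False
    have "K2 x \<le> K2 y" using K2_mono assms by simp
    then have "sp * Phi z * K2 x \<le> sp * Phi z * K2 y"
      using Phi_nonneg[of z] by (intro mult_left_mono) auto
    then show ?thesis using g_right[of z x] g_right[of z y] False assms by simp
  qed
qed

lemma sp_pos: "sp > 0" by simp

lemma gz_le: "sp * Phi z * K2 z \<le> Phi z"
proof -
  have "sp * Phi z * K2 z \<le> sp * Phi z * (1 / sp)"
    using K2_le[of z] Phi_nonneg[of z] by (intro mult_left_mono) auto
  then show ?thesis by simp
qed

lemma gz_ge: "Phi z - 1 \<le> sp * Phi z * K2 z"
proof -
  have "sp * (1 - Phi z) * K2 (-z) \<le> sp * (1 - Phi z) * (1 / sp)"
    using K2_le[of "-z"] Phi_le1[of z] by (intro mult_left_mono) auto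
  then show ?thesis using gz_eq[of z] by (simp add: algebra_simps)
qed

lemma g_upper: "w * sf z w \<le> Phi z"
proof (cases "w \<le> z")
  case True then show ?thesis using g_le_gz[OF True] gz_le[of z] by simp
next
  case False
  have "sp * Phi z * K2 w \<le> sp * Phi z * (1 / sp)"
    using K2_le[of w] Phi_nonneg[of z] by (intro mult_left_mono) auto
  then show ?thesis using g_right[of z w] False by simp
qed

lemma g_lower: "Phi z - 1 \<le> w * sf z w"
proof (cases "w \<le> z")
  case True
  have "sp * (1 - Phi z) * K2 (-w) \<le> sp * (1 - Phi z) * (1 / sp)"
    using K2_le[of "-w"] Phi_le1[of z] by (intro mult_left_mono) auto
  then show ?thesis using g_left[OF True] by (simp add: algebra_simps)
next
  case False then show ?thesis using gz_le_g[of z w] gz_ge[of z] by simp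
qed

lemma phis_bound: "\<bar>phis z w\<bar> \<le> 1"
  using g_upper[of w z] g_lower[of z w] by (auto simp: phis_def)

lemma GG_bound: "\<bar>GG z w - Phi z\<bar> \<le> 1"
  using g_upper[of w z] g_lower[of z w] by (auto simp: GG_def)

lemma sf_nonneg: "0 \<le> sf z w"
  using Phi_nonneg Phi_le1 by (simp add: sf_def F1_def F2_def)

lemma sf_le_sfz: "sf z w \<le> sf z z"
proof (cases "w \<le> z")
  case True
  have "F1 z w \<le> F1 z z"
  proof (rule DERIV_nonneg_imp_nondecreasing[OF True])
    fix x assume "w \<le> x" "x \<le> z"
    then have "F1 z x = sf z x" by (simp add: sf_def)
    then have "0 \<le> x * F1 z x + (1 - Phi z)" using g_lower[of z x] by simp
    then show "\<exists>y. (F1 z has_real_derivative y) (at x) \<and> 0 \<le> y" using F1_deriv by blast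
  qed
  then show ?thesis using True by (simp add: sf_def)
next
  case False
  have "F2 z w \<le> F2 z z"
  proof (rule DERIV_nonpos_imp_nonincreasing[of z w "F2 z"])
    show "z \<le> w" using False by simp
    fix x assume "z \<le> x" "x \<le> w"
    then have "F2 z x = sf z x" by (cases "x = z") (auto simp: sf_def F12_eq)
    then have "x * F2 z x - Phi z \<le> 0" using g_upper[of x z] by simp
    then show "\<exists>y. (F2 z has_real_derivative y) (at x) \<and> y \<le> 0" using F2_deriv by blast
  qed
  then show ?thesis using False by (simp add: sf_def F12_eq)
qed

lemma sf_bound: "\<bar>sf z w\<bar> \<le> sp / 4"
proof -
  have "sf z z = sp * (exp (z\<^sup>2 / 2) * (Phi z * (1 - Phi z)))" by (simp add: sf_def F1_def mult_ac)
  also have "\<dots> \<le> sp * (1 / 4)" using psi_le[of z] by (intro mult_left_mono) auto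
  finally show ?thesis using sf_le_sfz[of z w] sf_nonneg[of z w] by simp
qed



lemma sf_ftc: assumes "x \<le> y" shows "(phis z has_integral sf z y - sf z x) {x..y}"
proof (rule fundamental_theorem_of_calculus_interior_strong[where S = "{z}"])
  show "continuous_on {x..y} (sf z)" by (rule sf_cont)
  fix s assume "s \<in> {x<..<y} - {z}"
  then show "(sf z has_vector_derivative phis z s) (at s)"
    using sf_deriv[of s z] by (simp add: has_real_derivative_iff_has_vector_derivative)
qed (use assms in auto)

lemma ftc_bound:
  assumes "x \<le> y" and C: "\<And>s. s \<in> {x..y} \<Longrightarrow> \<bar>phis z s - c0\<bar> \<le> C" and "0 \<le> C"
  shows "\<bar>sf z y - sf z x - (y - x) * c0\<bar> \<le> C * (y - x)"
proof -
  have c: "((\<lambda>s. c0) has_integral c0 * (y - x)) {x..y}"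
    using has_integral_const_real[of c0 x y] assms by (simp add: mult.commute)
  have hi: "((\<lambda>s. phis z s - c0) has_integral (sf z y - sf z x) - c0 * (y - x)) {x..y}"
    by (intro has_integral_diff sf_ftc assms c)
  have "norm ((sf z y - sf z x) - c0 * (y - x)) \<le> C * Henstock_Kurzweil_Integration.content {x..y}"
    using has_integral_bound_real[where S = "{}", OF \<open>0 \<le> C\<close> _ hi] C by auto
  then show ?thesis using assms by (simp add: mult.commute)
qed

lemma hmono: "(x::real) \<le> y \<Longrightarrow> (if z < x then 1 else 0 :: real) \<le> (if z < y then 1 else 0)"
  by auto

lemma phis_GG: "phis z s = s * sf z s - (if z < s then 1 else 0) + 1 - Phi z"
  by (auto simp: phis_def)

lemma between_bound:
  assumes "x \<le> s" "s \<le> y"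
  shows "\<bar>phis z s - phis z x\<bar> \<le> GG z y - GG z x" "\<bar>phis z s - phis z y\<bar> \<le> GG z y - GG z x"
proof -
  have g1: "x * sf z x \<le> s * sf z s" "s * sf z s \<le> y * sf z y" using g_mono assms by auto
  have h1: "(if z < x then 1 else 0 :: real) \<le> (if z < s then 1 else 0)"
           "(if z < s then 1 else 0 :: real) \<le> (if z < y then 1 else 0)"
    using hmono assms by auto
  show "\<bar>phis z s - phis z x\<bar> \<le> GG z y - GG z x" "\<bar>phis z s - phis z y\<bar> \<le> GG z y - GG z x"
    unfolding phis_GG GG_def using g1 h1 by linarith+
qed

lemma key_pw: "\<bar>(a - b) * phis z a - (sf z a - sf z b)\<bar> \<le> (a - b) * (GG z a - GG z b)"
proof (cases "b \<le> a")
  case True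
  have "\<bar>sf z a - sf z b - (a - b) * phis z a\<bar> \<le> (GG z a - GG z b) * (a - b)"
  proof (rule ftc_bound[OF True])
    fix s assume "s \<in> {b..a}"
    then show "\<bar>phis z s - phis z a\<bar> \<le> GG z a - GG z b" using between_bound(2)[of b s a z] by auto
  next
    show "0 \<le> GG z a - GG z b" using between_bound(1)[of b b a z] True by auto
  qed
  then show ?thesis by (simp add: abs_minus_commute mult.commute)
next
  case False
  then have ab: "a \<le> b" by simp
  have "\<bar>sf z b - sf z a - (b - a) * phis z a\<bar> \<le> (GG z b - GG z a) * (b - a)"
  proof (rule ftc_bound[OF ab])
    fix s assume "s \<in> {a..b}"
    then show "\<bar>phis z s - phis z a\<bar> \<le> GG z b - GG z a" using between_bound(1)[of a s b z] by auto
  next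
    show "0 \<le> GG z b - GG z a" using between_bound(1)[of a a b z] ab by auto
  qed
  moreover have "(a - b) * phis z a - (sf z a - sf z b) = sf z b - sf z a - (b - a) * phis z a"
    by (simp add: algebra_simps)
  moreover have "(GG z b - GG z a) * (b - a) = (a - b) * (GG z a - GG z b)"
    by (simp add: algebra_simps)
  ultimately show ?thesis by simp
qed


lemma meas_nth[measurable]: "(\<lambda>x::real^'d. x $ i) \<in> borel_measurable borel"
  by (intro borel_measurable_continuous_onI continuous_intros)
lemma mv_meas[measurable]: "(\<lambda>x::real^'d. (A *v x) $ j) \<in> borel_measurable borel"
  unfolding matrix_vector_mult_def by simp measurable

lemma subalg_rv:
  assumes "X \<in> borel_measurable M"
  shows "subalgebra M (sigma_rv M X)"
  unfolding subalgebra_def sigma_rv_def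
proof
  show "space (vimage_algebra (space M) X borel) = space M" by simp
  have "X -` A \<inter> space M \<in> sets M" if "A \<in> sets borel" for A
    using measurable_sets[OF assms that] by simp
  then show "sets (vimage_algebra (space M) X borel) \<subseteq> sets M"
    by (auto simp: sets_vimage_algebra2)
qed

lemma fms_rv:
  assumes "prob_space M" "X \<in> borel_measurable M"
  shows "finite_measure_subalgebra M (sigma_rv M X)"
proof -
  interpret prob_space M by fact
  show ?thesis
    by (intro finite_measure_subalgebra.intro finite_measure_subalgebra_axioms.intro subalg_rv assms)
       (simp add: finite_measure_axioms)
qed

lemma meas_F:
  fixes X :: "'a \<Rightarrow> real^'d"
  assumes "u \<in> borel_measurable borel"
  shows "(\<lambda>\<omega>. u (X \<omega> $ i)) \<in> borel_measurable (sigma_rv M X)"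
proof -
  have "X \<in> sigma_rv M X \<rightarrow>\<^sub>M borel" unfolding sigma_rv_def
    by (rule measurable_vimage_algebra1) simp
  then show ?thesis using assms by measurable
qed

lemma sf_meas[measurable]: "sf z \<in> borel_measurable borel"
  by (intro borel_measurable_continuous_onI sf_cont)
lemma phis_meas[measurable]: "phis z \<in> borel_measurable borel"
  unfolding phis_def[abs_def] by measurable
lemma GG_meas[measurable]: "GG z \<in> borel_measurable borel"
  unfolding GG_def[abs_def] by measurable

lemma exch_int:
  fixes X X' :: "'a \<Rightarrow> real^'d" and u :: "(real^'d) \<times> (real^'d) \<Rightarrow> real"
  assumes [measurable]: "X \<in> borel_measurable M" "X' \<in> borel_measurable M"
    and exch: "distr M borel (\<lambda>\<omega>. (X \<omega>, X' \<omega>)) = distr M borel (\<lambda>\<omega>. (X' \<omega>, X \<omega>))"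
    and u[measurable]: "u \<in> borel_measurable (borel \<Otimes>\<^sub>M borel)"
  shows "(\<integral>\<omega>. u (X \<omega>, X' \<omega>) \<partial>M) = (\<integral>\<omega>. u (X' \<omega>, X \<omega>) \<partial>M)"
proof -
  have e: "distr M (borel \<Otimes>\<^sub>M borel) (\<lambda>\<omega>. (X \<omega>, X' \<omega>)) = distr M (borel \<Otimes>\<^sub>M borel) (\<lambda>\<omega>. (X' \<omega>, X \<omega>))"
    using exch by (simp add: borel_prod)
  have "(\<integral>\<omega>. u (X \<omega>, X' \<omega>) \<partial>M) = integral\<^sup>L (distr M (borel \<Otimes>\<^sub>M borel) (\<lambda>\<omega>. (X \<omega>, X' \<omega>))) u"
    by (rule integral_distr[where g = "\<lambda>\<omega>. (X \<omega>, X' \<omega>)" and f = u, symmetric]) measurable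
  also have "\<dots> = integral\<^sup>L (distr M (borel \<Otimes>\<^sub>M borel) (\<lambda>\<omega>. (X' \<omega>, X \<omega>))) u" using e by simp
  also have "\<dots> = (\<integral>\<omega>. u (X' \<omega>, X \<omega>) \<partial>M)"
    by (rule integral_distr[where g = "\<lambda>\<omega>. (X' \<omega>, X \<omega>)" and f = u]) measurable
  finally show ?thesis .
qed

lemma int_mult_bdd:
  fixes u v :: "'a \<Rightarrow> real"
  assumes "integrable M u" "v \<in> borel_measurable M" "\<And>\<omega>. \<omega> \<in> space M \<Longrightarrow> \<bar>v \<omega>\<bar> \<le> K"
  shows "integrable M (\<lambda>\<omega>. u \<omega> * v \<omega>)"
proof (rule Bochner_Integration.integrable_bound[where f = "\<lambda>\<omega>. K * u \<omega>"])
  show "integrable M (\<lambda>\<omega>. K * u \<omega>)" using assms(1) by simp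
  have [measurable]: "u \<in> borel_measurable M" using assms(1) by simp
  show "(\<lambda>\<omega>. u \<omega> * v \<omega>) \<in> borel_measurable M" using assms(2) by measurable
  show "AE \<omega> in M. norm (u \<omega> * v \<omega>) \<le> norm (K * u \<omega>)"
  proof (rule AE_I2)
    fix \<omega> assume "\<omega> \<in> space M"
    then have "\<bar>v \<omega>\<bar> \<le> \<bar>K\<bar>" using assms(3) by fastforce
    then show "norm (u \<omega> * v \<omega>) \<le> norm (K * u \<omega>)"
      by (simp add: abs_mult) (metis mult.commute mult_left_mono abs_ge_zero)
  qed
qed

lemma inner_mv_inv:
  fixes A :: "real^'d^'d"
  assumes "invertible A"
  shows "(matrix_inv A $ i) \<bullet> (A *v x) = x $ i"
proof -
  have "\<exists>A'. A ** A' = mat 1 \<and> A' ** A = mat 1" using assms by (simp add: invertible_def)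
  then have "A ** matrix_inv A = mat 1 \<and> matrix_inv A ** A = mat 1"
    unfolding matrix_inv_def by (rule someI_ex)
  then have "matrix_inv A *v (A *v x) = x" by (simp add: matrix_vector_mul_assoc)
  then have "(matrix_inv A *v (A *v x)) $ i = x $ i" by simp
  then show ?thesis by (simp add: matrix_vector_mult_def inner_vec_def)
qed

lemma g_abs: "\<bar>w * sf z w\<bar> \<le> 1"
  using g_upper[of w z] g_lower[of z w] Phi_nonneg[of z] Phi_le1[of z] by auto



context
  fixes M :: "'a measure" and X X' R :: "'a \<Rightarrow> real^'d" and \<Lambda> :: "real^'d^'d"
    and lam :: real and i :: 'd and ell :: "real^'d" and z :: real
  assumes ps: "prob_space M"
    and Xm[measurable]: "X \<in> borel_measurable M" and X'm[measurable]: "X' \<in> borel_measurable M"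
    and Rm[measurable]: "R \<in> borel_measurable M"
    and exch: "distr M borel (\<lambda>\<omega>. (X \<omega>, X' \<omega>)) = distr M borel (\<lambda>\<omega>. (X' \<omega>, X \<omega>))"
    and lam: "0 < lam"
    and inv: "invertible \<Lambda>"
    and l_def: "ell = matrix_inv \<Lambda> $ i"
    and D_int: "\<And>j. integrable M (\<lambda>\<omega>. (X \<omega> - X' \<omega>) $ j)"
    and DD_int: "\<And>j. integrable M (\<lambda>\<omega>. (X \<omega> - X' \<omega>) $ j * (X \<omega> - X' \<omega>) $ i)"
    and cond: "\<And>j. AE \<omega> in M. real_cond_exp M (sigma_rv M X) (\<lambda>\<omega>. (X \<omega> - X' \<omega>) $ j) \<omega>
                       = lam * (\<Lambda> *v X \<omega>) $ j + lam * R \<omega> $ j"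
    and Rint: "integrable M (\<lambda>\<omega>. ell \<bullet> R \<omega>)"
begin

interpretation P: prob_space M by (rule ps)
interpretation S: finite_measure_subalgebra M "sigma_rv M X" by (rule fms_rv[OF ps Xm])

lemma iLD: "integrable M (\<lambda>\<omega>. ell \<bullet> (X \<omega> - X' \<omega>))"
proof -
  have "integrable M (\<lambda>\<omega>. \<Sum>j\<in>UNIV. ell $ j * (X \<omega> - X' \<omega>) $ j)"
    using D_int by (intro Bochner_Integration.integrable_sum integrable_mult_right) auto
  then show ?thesis by (simp add: inner_vec_def)
qed

lemma iLDDi: "integrable M (\<lambda>\<omega>. ell \<bullet> (X \<omega> - X' \<omega>) * (X \<omega> - X' \<omega>) $ i)"
proof -
  have "integrable M (\<lambda>\<omega>. \<Sum>j\<in>UNIV. ell $ j * ((X \<omega> - X' \<omega>) $ j * (X \<omega> - X' \<omega>) $ i))"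
    using DD_int by (intro Bochner_Integration.integrable_sum integrable_mult_right) auto
  moreover have e: "ell \<bullet> v * v $ i = (\<Sum>j\<in>UNIV. ell $ j * (v $ j * v $ i))" for v :: "real^'d"
    by (simp add: inner_vec_def sum_distrib_right mult.assoc)
  ultimately show ?thesis by (simp only: e)
qed

lemma iALDDi: "integrable M (\<lambda>\<omega>. \<bar>ell \<bullet> (X \<omega> - X' \<omega>)\<bar> * (X \<omega> - X' \<omega>) $ i)"
  by (rule Bochner_Integration.integrable_bound[OF iLDDi]) (auto simp: abs_mult)

lemma ibdd: "(v :: 'a \<Rightarrow> real) \<in> borel_measurable M \<Longrightarrow> (\<And>\<omega>. \<omega> \<in> space M \<Longrightarrow> \<bar>v \<omega>\<bar> \<le> K) \<Longrightarrow> integrable M v"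
  using int_mult_bdd[of M "\<lambda>_. 1" v K] by simp

lemma stein_id:
  "P.prob {\<omega> \<in> space M. X \<omega> $ i \<le> z} - Phi z =
     (\<integral>\<omega>. phis z (X \<omega> $ i) \<partial>M) - (\<integral>\<omega>. X \<omega> $ i * sf z (X \<omega> $ i) \<partial>M)"
proof -
  have i1: "integrable M (\<lambda>\<omega>. phis z (X \<omega> $ i))" by (rule ibdd[where K = 1]) (auto simp: phis_bound)
  have i2: "integrable M (\<lambda>\<omega>. X \<omega> $ i * sf z (X \<omega> $ i))" by (rule ibdd[where K = 1]) (auto simp: g_abs)
  have "(\<integral>\<omega>. phis z (X \<omega> $ i) \<partial>M) - (\<integral>\<omega>. X \<omega> $ i * sf z (X \<omega> $ i) \<partial>M)
      = (\<integral>\<omega>. indicator {\<omega> \<in> space M. X \<omega> $ i \<le> z} \<omega> - Phi z \<partial>M)"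
    unfolding Bochner_Integration.integral_diff[OF i1 i2, symmetric]
    by (rule Bochner_Integration.integral_cong) (auto simp: phis_def indicator_def)
  also have "\<dots> = P.prob {\<omega> \<in> space M. X \<omega> $ i \<le> z} - Phi z"
  proof -
    have "integrable M (indicator {\<omega> \<in> space M. X \<omega> $ i \<le> z} :: 'a \<Rightarrow> real)"
      by (rule ibdd[where K = 1]) (auto simp: indicator_def)
    then show ?thesis by (subst Bochner_Integration.integral_diff) (auto simp: P.prob_space)
  qed
  finally show ?thesis by simp
qed

lemma exch_A: "(\<integral>\<omega>. ell \<bullet> (X \<omega> - X' \<omega>) * sf z (X' \<omega> $ i) \<partial>M)
   = - (\<integral>\<omega>. ell \<bullet> (X \<omega> - X' \<omega>) * sf z (X \<omega> $ i) \<partial>M)"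
proof -
  have "(\<integral>\<omega>. (\<lambda>(x, y). ell \<bullet> (x - y) * sf z (y $ i)) (X \<omega>, X' \<omega>) \<partial>M)
      = (\<integral>\<omega>. (\<lambda>(x, y). ell \<bullet> (x - y) * sf z (y $ i)) (X' \<omega>, X \<omega>) \<partial>M)"
    by (rule exch_int[OF Xm X'm exch]) measurable
  moreover have "(\<lambda>\<omega>. (\<lambda>(x, y). ell \<bullet> (x - y) * sf z (y $ i)) (X' \<omega>, X \<omega>))
     = (\<lambda>\<omega>. - (ell \<bullet> (X \<omega> - X' \<omega>) * sf z (X \<omega> $ i)))"
    by (rule ext) (simp add: inner_diff_right algebra_simps)
  ultimately show ?thesis by simp
qed

lemma exch_B: "(\<integral>\<omega>. \<bar>ell \<bullet> (X \<omega> - X' \<omega>)\<bar> * (X \<omega> - X' \<omega>) $ i * GG z (X' \<omega> $ i) \<partial>M)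
   = - (\<integral>\<omega>. \<bar>ell \<bullet> (X \<omega> - X' \<omega>)\<bar> * (X \<omega> - X' \<omega>) $ i * GG z (X \<omega> $ i) \<partial>M)"
proof -
  have "(\<integral>\<omega>. (\<lambda>(x, y). \<bar>ell \<bullet> (x - y)\<bar> * (x - y) $ i * GG z (y $ i)) (X \<omega>, X' \<omega>) \<partial>M)
      = (\<integral>\<omega>. (\<lambda>(x, y). \<bar>ell \<bullet> (x - y)\<bar> * (x - y) $ i * GG z (y $ i)) (X' \<omega>, X \<omega>) \<partial>M)"
    by (rule exch_int[OF Xm X'm exch]) measurable
  moreover have "(\<lambda>\<omega>. (\<lambda>(x, y). \<bar>ell \<bullet> (x - y)\<bar> * (x - y) $ i * GG z (y $ i)) (X' \<omega>, X \<omega>))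
     = (\<lambda>\<omega>. - (\<bar>ell \<bullet> (X \<omega> - X' \<omega>)\<bar> * (X \<omega> - X' \<omega>) $ i * GG z (X \<omega> $ i)))"
  proof
    fix \<omega>
    have "\<bar>ell \<bullet> (X' \<omega> - X \<omega>)\<bar> = \<bar>ell \<bullet> (X \<omega> - X' \<omega>)\<bar>"
      by (metis abs_minus_cancel inner_minus_right minus_diff_eq)
    then show "(\<lambda>(x, y). \<bar>ell \<bullet> (x - y)\<bar> * (x - y) $ i * GG z (y $ i)) (X' \<omega>, X \<omega>)
      = - (\<bar>ell \<bullet> (X \<omega> - X' \<omega>)\<bar> * (X \<omega> - X' \<omega>) $ i * GG z (X \<omega> $ i))"
      by (simp add: algebra_simps)
  qed
  ultimately show ?thesis by simp
qed

lemma exch_C: "(\<integral>\<omega>. \<bar>ell \<bullet> (X \<omega> - X' \<omega>)\<bar> * (X \<omega> - X' \<omega>) $ i \<partial>M) = 0"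
proof -
  have "(\<integral>\<omega>. (\<lambda>(x, y). \<bar>ell \<bullet> (x - y)\<bar> * (x - y) $ i) (X \<omega>, X' \<omega>) \<partial>M)
      = (\<integral>\<omega>. (\<lambda>(x, y). \<bar>ell \<bullet> (x - y)\<bar> * (x - y) $ i) (X' \<omega>, X \<omega>) \<partial>M)"
    by (rule exch_int[OF Xm X'm exch]) measurable
  moreover have "(\<lambda>\<omega>. (\<lambda>(x, y). \<bar>ell \<bullet> (x - y)\<bar> * (x - y) $ i) (X' \<omega>, X \<omega>))
     = (\<lambda>\<omega>. - (\<bar>ell \<bullet> (X \<omega> - X' \<omega>)\<bar> * (X \<omega> - X' \<omega>) $ i))"
  proof
    fix \<omega>
    have "\<bar>ell \<bullet> (X' \<omega> - X \<omega>)\<bar> = \<bar>ell \<bullet> (X \<omega> - X' \<omega>)\<bar>"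
      by (metis abs_minus_cancel inner_minus_right minus_diff_eq)
    then show "(\<lambda>(x, y). \<bar>ell \<bullet> (x - y)\<bar> * (x - y) $ i) (X' \<omega>, X \<omega>)
      = - (\<bar>ell \<bullet> (X \<omega> - X' \<omega>)\<bar> * (X \<omega> - X' \<omega>) $ i)"
      by (simp add: algebra_simps)
  qed
  ultimately show ?thesis by simp
qed

lemma ce_j:
  assumes [measurable]: "u \<in> borel_measurable borel" and ub: "\<And>w. \<bar>u w\<bar> \<le> K"
  shows "integrable M (\<lambda>\<omega>. u (X \<omega> $ i) * (lam * (\<Lambda> *v X \<omega>) $ j + lam * R \<omega> $ j))"
    "(\<integral>\<omega>. u (X \<omega> $ i) * (X \<omega> - X' \<omega>) $ j \<partial>M)
      = (\<integral>\<omega>. u (X \<omega> $ i) * (lam * (\<Lambda> *v X \<omega>) $ j + lam * R \<omega> $ j) \<partial>M)"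
proof -
  have uF[measurable]: "(\<lambda>\<omega>. u (X \<omega> $ i)) \<in> borel_measurable (sigma_rv M X)" by (rule meas_F) measurable
  have i0: "integrable M (\<lambda>\<omega>. u (X \<omega> $ i) * (X \<omega> - X' \<omega>) $ j)"
    using int_mult_bdd[OF D_int[of j], of "\<lambda>\<omega>. u (X \<omega> $ i)" K] ub by (simp add: mult.commute)
  have Dm[measurable]: "(\<lambda>\<omega>. (X \<omega> - X' \<omega>) $ j) \<in> borel_measurable M" by measurable
  note ce = S.real_cond_exp_intg[OF i0 uF Dm]
  have ae: "AE \<omega> in M. u (X \<omega> $ i) * real_cond_exp M (sigma_rv M X) (\<lambda>\<omega>. (X \<omega> - X' \<omega>) $ j) \<omega>
     = u (X \<omega> $ i) * (lam * (\<Lambda> *v X \<omega>) $ j + lam * R \<omega> $ j)"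
    using cond[of j] by eventually_elim simp
  have m2: "(\<lambda>\<omega>. u (X \<omega> $ i) * (lam * (\<Lambda> *v X \<omega>) $ j + lam * R \<omega> $ j)) \<in> borel_measurable M"
    by measurable
  have m1: "(\<lambda>\<omega>. u (X \<omega> $ i) * real_cond_exp M (sigma_rv M X) (\<lambda>\<omega>. (X \<omega> - X' \<omega>) $ j) \<omega>) \<in> borel_measurable M"
    by measurable
  show "integrable M (\<lambda>\<omega>. u (X \<omega> $ i) * (lam * (\<Lambda> *v X \<omega>) $ j + lam * R \<omega> $ j))"
    by (rule integrable_cong_AE_imp[OF ce(1) m2 ae])
  have "(\<integral>\<omega>. u (X \<omega> $ i) * real_cond_exp M (sigma_rv M X) (\<lambda>\<omega>. (X \<omega> - X' \<omega>) $ j) \<omega> \<partial>M)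
      = (\<integral>\<omega>. u (X \<omega> $ i) * (lam * (\<Lambda> *v X \<omega>) $ j + lam * R \<omega> $ j) \<partial>M)"
    by (rule integral_cong_AE[OF m1 m2 ae])
  then show "(\<integral>\<omega>. u (X \<omega> $ i) * (X \<omega> - X' \<omega>) $ j \<partial>M)
      = (\<integral>\<omega>. u (X \<omega> $ i) * (lam * (\<Lambda> *v X \<omega>) $ j + lam * R \<omega> $ j) \<partial>M)"
    using ce(2) by simp
qed

lemma abs_bound_int:
  fixes f g :: "'b \<Rightarrow> real"
  assumes "integrable N f" "integrable N g" "\<And>x. x \<in> space N \<Longrightarrow> \<bar>f x\<bar> \<le> g x"
  shows "\<bar>\<integral>x. f x \<partial>N\<bar> \<le> (\<integral>x. g x \<partial>N)"
proof -
  have "\<bar>\<integral>x. f x \<partial>N\<bar> \<le> (\<integral>x. \<bar>f x\<bar> \<partial>N)" by (rule integral_abs_bound)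
  also have "\<dots> \<le> (\<integral>x. g x \<partial>N)"
    using assms by (intro integral_mono) auto
  finally show ?thesis .
qed

lemma sf_abs: "\<bar>sf z w\<bar> \<le> sp / 4" by (rule sf_bound)

lemma ce_main:
  "(\<integral>\<omega>. ell \<bullet> (X \<omega> - X' \<omega>) * sf z (X \<omega> $ i) \<partial>M)
    = lam * ((\<integral>\<omega>. X \<omega> $ i * sf z (X \<omega> $ i) \<partial>M) + (\<integral>\<omega>. ell \<bullet> R \<omega> * sf z (X \<omega> $ i) \<partial>M))"
proof -
  have i0: "integrable M (\<lambda>\<omega>. sf z (X \<omega> $ i) * (X \<omega> - X' \<omega>) $ j)" for j
  proof -
    have "integrable M (\<lambda>\<omega>. (X \<omega> - X' \<omega>) $ j * sf z (X \<omega> $ i))"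
      by (rule int_mult_bdd[OF D_int _ sf_abs]) measurable
    then show ?thesis by (simp add: mult.commute)
  qed
  have "(\<integral>\<omega>. ell \<bullet> (X \<omega> - X' \<omega>) * sf z (X \<omega> $ i) \<partial>M)
     = (\<integral>\<omega>. (\<Sum>j\<in>UNIV. ell $ j * (sf z (X \<omega> $ i) * (X \<omega> - X' \<omega>) $ j)) \<partial>M)"
    by (rule Bochner_Integration.integral_cong) (auto simp: inner_vec_def sum_distrib_left mult_ac)
  also have "\<dots> = (\<Sum>j\<in>UNIV. ell $ j * (\<integral>\<omega>. sf z (X \<omega> $ i) * (X \<omega> - X' \<omega>) $ j \<partial>M))"
    using i0 by (simp add: Bochner_Integration.integral_sum)
  also have "\<dots> = (\<Sum>j\<in>UNIV. ell $ j * (\<integral>\<omega>. sf z (X \<omega> $ i) * (lam * (\<Lambda> *v X \<omega>) $ j + lam * R \<omega> $ j) \<partial>M))"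
    using ce_j(2)[OF sf_meas sf_abs] by simp
  also have "\<dots> = (\<integral>\<omega>. (\<Sum>j\<in>UNIV. ell $ j * (sf z (X \<omega> $ i) * (lam * (\<Lambda> *v X \<omega>) $ j + lam * R \<omega> $ j))) \<partial>M)"
    using ce_j(1)[OF sf_meas sf_abs] by (simp add: Bochner_Integration.integral_sum)
  also have "\<dots> = (\<integral>\<omega>. lam * (X \<omega> $ i * sf z (X \<omega> $ i) + ell \<bullet> R \<omega> * sf z (X \<omega> $ i)) \<partial>M)"
  proof (rule Bochner_Integration.integral_cong)
    fix \<omega>
    have "(\<Sum>j\<in>UNIV. ell $ j * (sf z (X \<omega> $ i) * (lam * (\<Lambda> *v X \<omega>) $ j + lam * R \<omega> $ j)))
        = sf z (X \<omega> $ i) * lam * (ell \<bullet> (\<Lambda> *v X \<omega>) + ell \<bullet> R \<omega>)"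
      by (simp add: inner_vec_def sum_distrib_left sum.distrib algebra_simps)
    also have "ell \<bullet> (\<Lambda> *v X \<omega>) = X \<omega> $ i" using inner_mv_inv[OF inv] l_def by simp
    finally show "(\<Sum>j\<in>UNIV. ell $ j * (sf z (X \<omega> $ i) * (lam * (\<Lambda> *v X \<omega>) $ j + lam * R \<omega> $ j)))
        = lam * (X \<omega> $ i * sf z (X \<omega> $ i) + ell \<bullet> R \<omega> * sf z (X \<omega> $ i))"
      by (simp add: algebra_simps)
  qed simp
  also have "\<dots> = lam * ((\<integral>\<omega>. X \<omega> $ i * sf z (X \<omega> $ i) \<partial>M) + (\<integral>\<omega>. ell \<bullet> R \<omega> * sf z (X \<omega> $ i) \<partial>M))"
  proof -
    have "integrable M (\<lambda>\<omega>. X \<omega> $ i * sf z (X \<omega> $ i))" by (rule ibdd[where K = 1]) (auto simp: g_abs)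
    moreover have "integrable M (\<lambda>\<omega>. ell \<bullet> R \<omega> * sf z (X \<omega> $ i))"
      by (rule int_mult_bdd[OF Rint _ sf_abs]) measurable
    ultimately show ?thesis by simp
  qed
  finally show ?thesis .
qed

lemma main_bound:
  "\<bar>P.prob {\<omega> \<in> space M. X \<omega> $ i \<le> z} - Phi z\<bar>
   \<le> (\<integral>\<omega>. \<bar>1 - real_cond_exp M (sigma_rv M X) (\<lambda>\<omega>. ell \<bullet> (X \<omega> - X' \<omega>) * (X \<omega> - X' \<omega>) $ i) \<omega> / (2 * lam)\<bar> \<partial>M)
     + (1 / lam) * (\<integral>\<omega>. \<bar>real_cond_exp M (sigma_rv M X) (\<lambda>\<omega>. \<bar>ell \<bullet> (X \<omega> - X' \<omega>)\<bar> * (X \<omega> - X' \<omega>) $ i) \<omega>\<bar> \<partial>M)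
     + sp / 4 * (\<integral>\<omega>. \<bar>ell \<bullet> R \<omega>\<bar> \<partial>M)"
proof -
  let ?F = "sigma_rv M X"
  let ?f = "\<lambda>\<omega>. sf z (X \<omega> $ i)"
  let ?f' = "\<lambda>\<omega>. sf z (X' \<omega> $ i)"
  let ?ph = "\<lambda>\<omega>. phis z (X \<omega> $ i)"
  let ?g = "\<lambda>\<omega>. X \<omega> $ i * sf z (X \<omega> $ i)"
  let ?G = "\<lambda>\<omega>. GG z (X \<omega> $ i)"
  let ?G' = "\<lambda>\<omega>. GG z (X' \<omega> $ i)"
  let ?LD = "\<lambda>\<omega>. ell \<bullet> (X \<omega> - X' \<omega>)"
  let ?Di = "\<lambda>\<omega>. (X \<omega> - X' \<omega>) $ i"
  let ?LR = "\<lambda>\<omega>. ell \<bullet> R \<omega>"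
  let ?CE1 = "real_cond_exp M ?F (\<lambda>\<omega>. ell \<bullet> (X \<omega> - X' \<omega>) * (X \<omega> - X' \<omega>) $ i)"
  let ?CE2 = "real_cond_exp M ?F (\<lambda>\<omega>. \<bar>ell \<bullet> (X \<omega> - X' \<omega>)\<bar> * (X \<omega> - X' \<omega>) $ i)"
  let ?c = "Phi z"
  define A where "A = (\<integral>\<omega>. ?LD \<omega> * ?f \<omega> \<partial>M)"
  define J where "J = (\<integral>\<omega>. ?LD \<omega> * (?f \<omega> - ?f' \<omega>) \<partial>M)"
  define Eph where "Eph = (\<integral>\<omega>. ?ph \<omega> \<partial>M)"
  define Eg where "Eg = (\<integral>\<omega>. ?g \<omega> \<partial>M)"
  define ER where "ER = (\<integral>\<omega>. ?LR \<omega> * ?f \<omega> \<partial>M)"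
  define T1 where "T1 = (\<integral>\<omega>. ?ph \<omega> * (1 - ?CE1 \<omega> / (2 * lam)) \<partial>M)"
  define T2 where "T2 = (\<integral>\<omega>. ?LD \<omega> * ?Di \<omega> * ?ph \<omega> - ?LD \<omega> * (?f \<omega> - ?f' \<omega>) \<partial>M)"
  define Q where "Q = (\<integral>\<omega>. ?LD \<omega> * ?Di \<omega> * ?ph \<omega> \<partial>M)"

  have [measurable]: "?LD \<in> borel_measurable M" "?Di \<in> borel_measurable M" by measurable
  have iLDf: "integrable M (\<lambda>\<omega>. ?LD \<omega> * ?f \<omega>)"
    by (rule int_mult_bdd[OF iLD _ sf_abs]) measurable
  have iLDf': "integrable M (\<lambda>\<omega>. ?LD \<omega> * ?f' \<omega>)"
    by (rule int_mult_bdd[OF iLD _ sf_abs]) measurable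
  have iph: "integrable M ?ph" by (rule ibdd[where K = 1]) (auto simp: phis_bound)
  have ig: "integrable M ?g" by (rule ibdd[where K = 1]) (auto simp: g_abs)
  have iER: "integrable M (\<lambda>\<omega>. ?LR \<omega> * ?f \<omega>)"
    by (rule int_mult_bdd[OF Rint _ sf_abs]) measurable
  have iCE1: "integrable M ?CE1" by (rule S.real_cond_exp_int(1)[OF iLDDi])
  have iCE2: "integrable M ?CE2" by (rule S.real_cond_exp_int(1)[OF iALDDi])
  have iQ: "integrable M (\<lambda>\<omega>. ?LD \<omega> * ?Di \<omega> * ?ph \<omega>)"
    by (rule int_mult_bdd[OF iLDDi _ phis_bound]) measurable
  have phF[measurable]: "?ph \<in> borel_measurable ?F" by (rule meas_F) measurable

  have J_eq: "J = 2 * A"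
  proof -
    have "J = (\<integral>\<omega>. ?LD \<omega> * ?f \<omega> - ?LD \<omega> * ?f' \<omega> \<partial>M)"
      unfolding J_def by (simp add: right_diff_distrib)
    also have "\<dots> = A - (\<integral>\<omega>. ?LD \<omega> * ?f' \<omega> \<partial>M)"
      unfolding A_def by (rule Bochner_Integration.integral_diff[OF iLDf iLDf'])
    also have "\<dots> = 2 * A" using exch_A unfolding A_def by simp
    finally show ?thesis .
  qed
  have A_eq: "A = lam * (Eg + ER)" unfolding A_def Eg_def ER_def by (rule ce_main)
  have stein: "P.prob {\<omega> \<in> space M. X \<omega> $ i \<le> z} - ?c = Eph - Eg"
    unfolding Eph_def Eg_def by (rule stein_id)

  have T1_eq: "T1 = Eph - Q / (2 * lam)"
  proof -
    have iphCE1: "integrable M (\<lambda>\<omega>. ?ph \<omega> * ?CE1 \<omega>)"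
      using int_mult_bdd[OF iCE1 _ phis_bound] by (simp add: mult.commute)
    have i0: "integrable M (\<lambda>\<omega>. ?ph \<omega> * (?LD \<omega> * ?Di \<omega>))"
      using iQ by (simp add: mult_ac)
    have ce: "(\<integral>\<omega>. ?ph \<omega> * ?CE1 \<omega> \<partial>M) = (\<integral>\<omega>. ?ph \<omega> * (?LD \<omega> * ?Di \<omega>) \<partial>M)"
      by (rule S.real_cond_exp_intg(2)[OF i0 phF]) measurable
    have "T1 = (\<integral>\<omega>. ?ph \<omega> - (1 / (2 * lam)) * (?ph \<omega> * ?CE1 \<omega>) \<partial>M)"
      unfolding T1_def by (rule Bochner_Integration.integral_cong) (auto simp: algebra_simps)
    also have "\<dots> = Eph - (1 / (2 * lam)) * (\<integral>\<omega>. ?ph \<omega> * ?CE1 \<omega> \<partial>M)"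
      unfolding Eph_def using iph iphCE1 by simp
    also have "\<dots> = Eph - Q / (2 * lam)"
      unfolding ce Q_def by (simp add: mult_ac)
    finally show ?thesis .
  qed
  have iLDff: "integrable M (\<lambda>\<omega>. ?LD \<omega> * (?f \<omega> - ?f' \<omega>))"
    using iLDf iLDf' by (simp add: right_diff_distrib)
  have T2_eq: "T2 = Q - J"
    unfolding T2_def Q_def J_def by (rule Bochner_Integration.integral_diff[OF iQ iLDff])
  have decomp: "P.prob {\<omega> \<in> space M. X \<omega> $ i \<le> z} - ?c = T1 + T2 / (2 * lam) + ER"
  proof -
    have e1: "T2 / (2 * lam) = Q / (2 * lam) - J / (2 * lam)" by (simp add: T2_eq diff_divide_distrib)
    have e2: "J / (2 * lam) = Eg + ER" using J_eq A_eq lam by simp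
    show ?thesis using stein T1_eq e1 e2 by linarith
  qed

  have b1: "\<bar>T1\<bar> \<le> (\<integral>\<omega>. \<bar>1 - ?CE1 \<omega> / (2 * lam)\<bar> \<partial>M)"
    unfolding T1_def
  proof (rule abs_bound_int)
    have i1: "integrable M (\<lambda>\<omega>. 1 - ?CE1 \<omega> / (2 * lam))" using iCE1 by simp
    then show "integrable M (\<lambda>\<omega>. \<bar>1 - ?CE1 \<omega> / (2 * lam)\<bar>)" by simp
    show "integrable M (\<lambda>\<omega>. ?ph \<omega> * (1 - ?CE1 \<omega> / (2 * lam)))"
      using int_mult_bdd[OF i1 _ phis_bound] by (simp add: mult.commute)
    fix \<omega>
    have "\<bar>?ph \<omega>\<bar> * \<bar>1 - ?CE1 \<omega> / (2 * lam)\<bar> \<le> 1 * \<bar>1 - ?CE1 \<omega> / (2 * lam)\<bar>"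
      by (intro mult_right_mono phis_bound) auto
    then show "\<bar>?ph \<omega> * (1 - ?CE1 \<omega> / (2 * lam))\<bar> \<le> \<bar>1 - ?CE1 \<omega> / (2 * lam)\<bar>"
      by (simp add: abs_mult)
  qed
  have b3: "\<bar>ER\<bar> \<le> sp / 4 * (\<integral>\<omega>. \<bar>?LR \<omega>\<bar> \<partial>M)"
  proof -
    have "\<bar>ER\<bar> \<le> (\<integral>\<omega>. sp / 4 * \<bar>?LR \<omega>\<bar> \<partial>M)"
      unfolding ER_def
    proof (rule abs_bound_int[OF iER])
      show "integrable M (\<lambda>\<omega>. sp / 4 * \<bar>?LR \<omega>\<bar>)" using Rint by simp
      fix \<omega>
      have "\<bar>?LR \<omega>\<bar> * \<bar>?f \<omega>\<bar> \<le> \<bar>?LR \<omega>\<bar> * (sp / 4)"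
        by (intro mult_left_mono sf_abs) auto
      then show "\<bar>?LR \<omega> * ?f \<omega>\<bar> \<le> sp / 4 * \<bar>?LR \<omega>\<bar>" by (simp add: abs_mult mult.commute)
    qed
    then show ?thesis by simp
  qed
  have b2: "\<bar>T2\<bar> \<le> 2 * (\<integral>\<omega>. \<bar>?CE2 \<omega>\<bar> \<partial>M)"
  proof -
    have iGG: "integrable M (\<lambda>\<omega>. \<bar>?LD \<omega>\<bar> * ?Di \<omega> * (?G \<omega> - ?G' \<omega>))"
    proof (rule int_mult_bdd[OF iALDDi])
      fix \<omega>
      show "\<bar>?G \<omega> - ?G' \<omega>\<bar> \<le> 2"
        using GG_bound[of z "X \<omega> $ i"] GG_bound[of z "X' \<omega> $ i"] by linarith
    qed measurable
    have iG: "integrable M (\<lambda>\<omega>. \<bar>?LD \<omega>\<bar> * ?Di \<omega> * ?G \<omega>)"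
    proof (rule int_mult_bdd[OF iALDDi])
      fix \<omega>
      show "\<bar>?G \<omega>\<bar> \<le> 2"
        using GG_bound[of z "X \<omega> $ i"] Phi_nonneg[of z] Phi_le1[of z] by linarith
    qed measurable
    have iG': "integrable M (\<lambda>\<omega>. \<bar>?LD \<omega>\<bar> * ?Di \<omega> * ?G' \<omega>)"
    proof (rule int_mult_bdd[OF iALDDi])
      fix \<omega>
      show "\<bar>?G' \<omega>\<bar> \<le> 2"
        using GG_bound[of z "X' \<omega> $ i"] Phi_nonneg[of z] Phi_le1[of z] by linarith
    qed measurable
    have s1: "\<bar>T2\<bar> \<le> (\<integral>\<omega>. \<bar>?LD \<omega>\<bar> * ?Di \<omega> * (?G \<omega> - ?G' \<omega>) \<partial>M)"
      unfolding T2_def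
    proof (rule abs_bound_int[OF _ iGG])
      show "integrable M (\<lambda>\<omega>. ?LD \<omega> * ?Di \<omega> * ?ph \<omega> - ?LD \<omega> * (?f \<omega> - ?f' \<omega>))"
        using iQ iLDff by simp
      fix \<omega>
      have k: "\<bar>(X \<omega> $ i - X' \<omega> $ i) * phis z (X \<omega> $ i) - (sf z (X \<omega> $ i) - sf z (X' \<omega> $ i))\<bar>
          \<le> (X \<omega> $ i - X' \<omega> $ i) * (GG z (X \<omega> $ i) - GG z (X' \<omega> $ i))"
        by (rule key_pw)
      have "\<bar>?LD \<omega> * ?Di \<omega> * ?ph \<omega> - ?LD \<omega> * (?f \<omega> - ?f' \<omega>)\<bar>
          = \<bar>?LD \<omega>\<bar> * \<bar>(X \<omega> $ i - X' \<omega> $ i) * phis z (X \<omega> $ i) - (sf z (X \<omega> $ i) - sf z (X' \<omega> $ i))\<bar>"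
        by (simp add: abs_mult[symmetric] algebra_simps)
      also have "\<dots> \<le> \<bar>?LD \<omega>\<bar> * ((X \<omega> $ i - X' \<omega> $ i) * (GG z (X \<omega> $ i) - GG z (X' \<omega> $ i)))"
        by (intro mult_left_mono k) auto
      finally show "\<bar>?LD \<omega> * ?Di \<omega> * ?ph \<omega> - ?LD \<omega> * (?f \<omega> - ?f' \<omega>)\<bar>
          \<le> \<bar>?LD \<omega>\<bar> * ?Di \<omega> * (?G \<omega> - ?G' \<omega>)" by (simp add: mult_ac)
    qed
    have "(\<integral>\<omega>. \<bar>?LD \<omega>\<bar> * ?Di \<omega> * (?G \<omega> - ?G' \<omega>) \<partial>M)
        = (\<integral>\<omega>. \<bar>?LD \<omega>\<bar> * ?Di \<omega> * ?G \<omega> - \<bar>?LD \<omega>\<bar> * ?Di \<omega> * ?G' \<omega> \<partial>M)"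
      by (simp add: right_diff_distrib)
    also have "\<dots> = (\<integral>\<omega>. \<bar>?LD \<omega>\<bar> * ?Di \<omega> * ?G \<omega> \<partial>M) - (\<integral>\<omega>. \<bar>?LD \<omega>\<bar> * ?Di \<omega> * ?G' \<omega> \<partial>M)"
      by (rule Bochner_Integration.integral_diff[OF iG iG'])
    also have "\<dots> = 2 * (\<integral>\<omega>. \<bar>?LD \<omega>\<bar> * ?Di \<omega> * ?G \<omega> \<partial>M)" using exch_B by simp
    also have "(\<integral>\<omega>. \<bar>?LD \<omega>\<bar> * ?Di \<omega> * ?G \<omega> \<partial>M) = (\<integral>\<omega>. \<bar>?LD \<omega>\<bar> * ?Di \<omega> * (?G \<omega> - ?c) \<partial>M)"
    proof -
      have "(\<integral>\<omega>. \<bar>?LD \<omega>\<bar> * ?Di \<omega> * (?G \<omega> - ?c) \<partial>M)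
         = (\<integral>\<omega>. \<bar>?LD \<omega>\<bar> * ?Di \<omega> * ?G \<omega> - ?c * (\<bar>?LD \<omega>\<bar> * ?Di \<omega>) \<partial>M)"
        by (simp add: algebra_simps)
      also have "\<dots> = (\<integral>\<omega>. \<bar>?LD \<omega>\<bar> * ?Di \<omega> * ?G \<omega> \<partial>M) - ?c * (\<integral>\<omega>. \<bar>?LD \<omega>\<bar> * ?Di \<omega> \<partial>M)"
        using iG iALDDi by simp
      finally show ?thesis using exch_C by simp
    qed
    also have "(\<integral>\<omega>. \<bar>?LD \<omega>\<bar> * ?Di \<omega> * (?G \<omega> - ?c) \<partial>M) = (\<integral>\<omega>. (?G \<omega> - ?c) * ?CE2 \<omega> \<partial>M)"
    proof -
      have GF[measurable]: "(\<lambda>\<omega>. ?G \<omega> - ?c) \<in> borel_measurable ?F"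
        using meas_F[of "\<lambda>w. GG z w - Phi z" X i M] by measurable
      have "integrable M (\<lambda>\<omega>. (\<bar>?LD \<omega>\<bar> * ?Di \<omega>) * (?G \<omega> - ?c))"
      proof (rule int_mult_bdd[OF iALDDi])
        show "(\<lambda>\<omega>. ?G \<omega> - ?c) \<in> borel_measurable M" by measurable
        show "\<bar>?G \<omega> - ?c\<bar> \<le> 1" for \<omega> by (rule GG_bound)
      qed
      then have i0: "integrable M (\<lambda>\<omega>. (?G \<omega> - ?c) * (\<bar>?LD \<omega>\<bar> * ?Di \<omega>))"
        by (simp add: mult.commute)
      show ?thesis
        using S.real_cond_exp_intg(2)[OF i0 GF] by (simp add: mult_ac)
    qed
    finally have s2: "(\<integral>\<omega>. \<bar>?LD \<omega>\<bar> * ?Di \<omega> * (?G \<omega> - ?G' \<omega>) \<partial>M) = 2 * (\<integral>\<omega>. (?G \<omega> - ?c) * ?CE2 \<omega> \<partial>M)" .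
    have s3: "(\<integral>\<omega>. (?G \<omega> - ?c) * ?CE2 \<omega> \<partial>M) \<le> (\<integral>\<omega>. \<bar>?CE2 \<omega>\<bar> \<partial>M)"
    proof (rule integral_mono)
      have "integrable M (\<lambda>\<omega>. ?CE2 \<omega> * (?G \<omega> - ?c))"
      proof (rule int_mult_bdd[OF iCE2])
        show "(\<lambda>\<omega>. ?G \<omega> - ?c) \<in> borel_measurable M" by measurable
        show "\<bar>?G \<omega> - ?c\<bar> \<le> 1" for \<omega> by (rule GG_bound)
      qed
      then show "integrable M (\<lambda>\<omega>. (?G \<omega> - ?c) * ?CE2 \<omega>)"
        by (simp add: mult.commute)
      show "integrable M (\<lambda>\<omega>. \<bar>?CE2 \<omega>\<bar>)" using iCE2 by simp
      fix \<omega>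
      have "\<bar>(?G \<omega> - ?c) * ?CE2 \<omega>\<bar> \<le> 1 * \<bar>?CE2 \<omega>\<bar>"
        unfolding abs_mult by (intro mult_right_mono GG_bound) auto
      then show "(?G \<omega> - ?c) * ?CE2 \<omega> \<le> \<bar>?CE2 \<omega>\<bar>" by simp
    qed
    show ?thesis using s1 s2 s3 by simp
  qed
  have "\<bar>P.prob {\<omega> \<in> space M. X \<omega> $ i \<le> z} - ?c\<bar> \<le> \<bar>T1\<bar> + \<bar>T2\<bar> / (2 * lam) + \<bar>ER\<bar>"
    unfolding decomp using lam by (simp add: abs_triangle_ineq4 order_trans[OF abs_triangle_ineq] abs_div)
  also have "\<dots> \<le> (\<integral>\<omega>. \<bar>1 - ?CE1 \<omega> / (2 * lam)\<bar> \<partial>M) + (2 * (\<integral>\<omega>. \<bar>?CE2 \<omega>\<bar> \<partial>M)) / (2 * lam)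
        + sp / 4 * (\<integral>\<omega>. \<bar>?LR \<omega>\<bar> \<partial>M)"
    using b1 b2 b3 lam by (intro add_mono divide_right_mono) auto
  finally show ?thesis using lam by simp
qed

end


theorem theorem1p4:
  fixes M :: "'a measure"
    and X X' R :: "'a \<Rightarrow> real ^ 'd"
    and \<Lambda> :: "real ^ 'd ^ 'd"
    and lam :: real
    and i :: 'd
    and D :: "'a \<Rightarrow> real ^ 'd"
    and ell :: "real ^ 'd"
  assumes "prob_space M"
    and X_meas: "X \<in> borel_measurable M" and X'_meas: "X' \<in> borel_measurable M"
    and R_meas: "R \<in> borel_measurable M"
    and exch: "distr M borel (\<lambda>\<omega>. (X \<omega>, X' \<omega>)) = distr M borel (\<lambda>\<omega>. (X' \<omega>, X \<omega>))"
    and lam: "0 < lam" "lam < 1"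
    and inv: "invertible \<Lambda>"
    and D_def: "D \<equiv> (\<lambda>\<omega>. X \<omega> - X' \<omega>)"
    and l_def: "ell \<equiv> matrix_inv \<Lambda> $ i"
    and D_int: "\<And>j. integrable M (\<lambda>\<omega>. D \<omega> $ j)"
    and DD_int: "\<And>j. integrable M (\<lambda>\<omega>. D \<omega> $ j * D \<omega> $ i)"
    and cond: "\<And>j. AE \<omega> in M. real_cond_exp M (sigma_rv M X) (\<lambda>\<omega>. D \<omega> $ j) \<omega>
                       = lam * (\<Lambda> *v X \<omega>) $ j + lam * R \<omega> $ j"
  shows "ennreal (kolmogorov_dist (distr M borel (\<lambda>\<omega>. X \<omega> $ i))
                                  (density lborel std_normal_density))
    \<le> (\<integral>\<^sup>+ \<omega>. ennreal \<bar>1 - real_cond_exp M (sigma_rv M X)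
                               (\<lambda>\<omega>. (ell \<bullet> D \<omega>) * D \<omega> $ i) \<omega> / (2 * lam)\<bar> \<partial>M)
      + ennreal (1 / lam) * (\<integral>\<^sup>+ \<omega>. ennreal \<bar>real_cond_exp M (sigma_rv M X)
                               (\<lambda>\<omega>. \<bar>ell \<bullet> D \<omega>\<bar> * D \<omega> $ i) \<omega>\<bar> \<partial>M)
      + ennreal (sqrt (2 * pi) / 4) * (\<integral>\<^sup>+ \<omega>. ennreal \<bar>ell \<bullet> R \<omega>\<bar> \<partial>M)"
proof -
  interpret P: prob_space M by fact
  interpret S: finite_measure_subalgebra M "sigma_rv M X" by (rule fms_rv[OF assms(1) X_meas])
  have ell_eq: "ell = matrix_inv \<Lambda> $ i" using l_def by simp
  note [measurable] = X_meas X'_meas R_meas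
  let ?RHS = "(\<integral>\<^sup>+ \<omega>. ennreal \<bar>1 - real_cond_exp M (sigma_rv M X)
                               (\<lambda>\<omega>. (ell \<bullet> D \<omega>) * D \<omega> $ i) \<omega> / (2 * lam)\<bar> \<partial>M)
      + ennreal (1 / lam) * (\<integral>\<^sup>+ \<omega>. ennreal \<bar>real_cond_exp M (sigma_rv M X)
                               (\<lambda>\<omega>. \<bar>ell \<bullet> D \<omega>\<bar> * D \<omega> $ i) \<omega>\<bar> \<partial>M)
      + ennreal (sqrt (2 * pi) / 4) * (\<integral>\<^sup>+ \<omega>. ennreal \<bar>ell \<bullet> R \<omega>\<bar> \<partial>M)"
  show ?thesis
  proof (cases "(\<integral>\<^sup>+ \<omega>. ennreal \<bar>ell \<bullet> R \<omega>\<bar> \<partial>M) = \<infinity>")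
    case True
    have cinf: "ennreal (sqrt (2 * pi) / 4) * (\<integral>\<^sup>+ \<omega>. ennreal \<bar>ell \<bullet> R \<omega>\<bar> \<partial>M) = \<infinity>"
      unfolding True by (simp add: ennreal_mult_top)
    have "ennreal (sqrt (2 * pi) / 4) * (\<integral>\<^sup>+ \<omega>. ennreal \<bar>ell \<bullet> R \<omega>\<bar> \<partial>M) \<le> ?RHS"
      by (rule add_increasing) auto
    then have rinf: "?RHS = \<infinity>" unfolding cinf by (simp add: top_unique)
    show ?thesis unfolding rinf infinity_ennreal_def by (rule top_greatest)
  next
    case False
    have Rint: "integrable M (\<lambda>\<omega>. ell \<bullet> R \<omega>)"
      by (rule integrableI_bounded) (use False in \<open>auto simp: top.not_eq_extremum\<close>)
    define CE1 where "CE1 = real_cond_exp M (sigma_rv M X) (\<lambda>\<omega>. ell \<bullet> (X \<omega> - X' \<omega>) * (X \<omega> - X' \<omega>) $ i)"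
    define CE2 where "CE2 = real_cond_exp M (sigma_rv M X) (\<lambda>\<omega>. \<bar>ell \<bullet> (X \<omega> - X' \<omega>)\<bar> * (X \<omega> - X' \<omega>) $ i)"
    define Bnd where "Bnd = (\<integral>\<omega>. \<bar>1 - CE1 \<omega> / (2 * lam)\<bar> \<partial>M) + (1 / lam) * (\<integral>\<omega>. \<bar>CE2 \<omega>\<bar> \<partial>M)
       + sqrt (2 * pi) / 4 * (\<integral>\<omega>. \<bar>ell \<bullet> R \<omega>\<bar> \<partial>M)"
    have D_int': "\<And>j. integrable M (\<lambda>\<omega>. (X \<omega> - X' \<omega>) $ j)" using D_int unfolding D_def .
    have DD_int': "\<And>j. integrable M (\<lambda>\<omega>. (X \<omega> - X' \<omega>) $ j * (X \<omega> - X' \<omega>) $ i)" using DD_int unfolding D_def .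
    have cond': "\<And>j. AE \<omega> in M. real_cond_exp M (sigma_rv M X) (\<lambda>\<omega>. (X \<omega> - X' \<omega>) $ j) \<omega>
                       = lam * (\<Lambda> *v X \<omega>) $ j + lam * R \<omega> $ j" using cond unfolding D_def .
    have mb: "\<bar>P.prob {\<omega> \<in> space M. X \<omega> $ i \<le> z} - Phi z\<bar> \<le> Bnd" for z
      using main_bound[OF assms(1) X_meas X'_meas R_meas exch lam(1) inv ell_eq D_int' DD_int' cond' Rint, of z]
      unfolding Bnd_def CE1_def CE2_def .
    have kd: "kolmogorov_dist (distr M borel (\<lambda>\<omega>. X \<omega> $ i)) (density lborel std_normal_density) \<le> Bnd"
      unfolding kolmogorov_dist_def
    proof (rule cSUP_least)
      fix z
      have "measure (distr M borel (\<lambda>\<omega>. X \<omega> $ i)) {..z} = P.prob ((\<lambda>\<omega>. X \<omega> $ i) -` {..z} \<inter> space M)"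
        by (rule measure_distr) auto
      also have "(\<lambda>\<omega>. X \<omega> $ i) -` {..z} \<inter> space M = {\<omega> \<in> space M. X \<omega> $ i \<le> z}" by auto
      finally show "\<bar>measure (distr M borel (\<lambda>\<omega>. X \<omega> $ i)) {..z} - measure (density lborel std_normal_density) {..z}\<bar> \<le> Bnd"
        using mb[of z] by (simp add: Phi_def)
    qed simp
    have iCE1: "integrable M CE1" unfolding CE1_def by (rule S.real_cond_exp_int(1)[OF iLDDi[OF assms(1) X_meas X'_meas R_meas exch lam(1) inv ell_eq D_int' DD_int' cond' Rint]])
    have iCE2: "integrable M CE2" unfolding CE2_def by (rule S.real_cond_exp_int(1)[OF iALDDi[OF assms(1) X_meas X'_meas R_meas exch lam(1) inv ell_eq D_int' DD_int' cond' Rint]])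
    have n1: "(\<integral>\<^sup>+ \<omega>. ennreal \<bar>1 - CE1 \<omega> / (2 * lam)\<bar> \<partial>M) = ennreal (\<integral>\<omega>. \<bar>1 - CE1 \<omega> / (2 * lam)\<bar> \<partial>M)"
      by (rule nn_integral_eq_integral) (use iCE1 in auto)
    have n2: "(\<integral>\<^sup>+ \<omega>. ennreal \<bar>CE2 \<omega>\<bar> \<partial>M) = ennreal (\<integral>\<omega>. \<bar>CE2 \<omega>\<bar> \<partial>M)"
      by (rule nn_integral_eq_integral) (use iCE2 in auto)
    have n3: "(\<integral>\<^sup>+ \<omega>. ennreal \<bar>ell \<bullet> R \<omega>\<bar> \<partial>M) = ennreal (\<integral>\<omega>. \<bar>ell \<bullet> R \<omega>\<bar> \<partial>M)"
      by (rule nn_integral_eq_integral) (use Rint in auto)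
    have nn: "0 \<le> (\<integral>\<omega>. \<bar>1 - CE1 \<omega> / (2 * lam)\<bar> \<partial>M)" "0 \<le> (\<integral>\<omega>. \<bar>CE2 \<omega>\<bar> \<partial>M)"
      "0 \<le> (\<integral>\<omega>. \<bar>ell \<bullet> R \<omega>\<bar> \<partial>M)" by auto
    have comb: "ennreal a + ennreal (1 / lam) * ennreal b + ennreal (sqrt (2 * pi) / 4) * ennreal r
       = ennreal (a + (1 / lam) * b + sqrt (2 * pi) / 4 * r)" if "0 \<le> a" "0 \<le> b" "0 \<le> r" for a b r
    proof -
      have "ennreal (a + (1 / lam) * b + sqrt (2 * pi) / 4 * r)
          = ennreal a + ennreal ((1 / lam) * b) + ennreal (sqrt (2 * pi) / 4 * r)"
        using that lam by (simp add: ennreal_plus)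
      also have "\<dots> = ennreal a + ennreal (1 / lam) * ennreal b + ennreal (sqrt (2 * pi) / 4) * ennreal r"
      proof -
        have e1: "ennreal ((1 / lam) * b) = ennreal (1 / lam) * ennreal b"
          by (rule ennreal_mult) (use lam that in auto)
        have e2: "ennreal (sqrt (2 * pi) / 4 * r) = ennreal (sqrt (2 * pi) / 4) * ennreal r"
          by (rule ennreal_mult) (use that in auto)
        show ?thesis unfolding e1 e2 ..
      qed
      finally show ?thesis by simp
    qed
    have "?RHS = ennreal Bnd"
      unfolding D_def CE1_def[symmetric] CE2_def[symmetric] n1 n2 n3 Bnd_def
      using comb[OF nn] .
    moreover have "ennreal (kolmogorov_dist (distr M borel (\<lambda>\<omega>. X \<omega> $ i)) (density lborel std_normal_density)) \<le> ennreal Bnd"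
      using kd by (rule ennreal_leI)
    ultimately show ?thesis by simp
  qed
qed


end
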